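(* Let $\mathcal{L}$ be a horizontal segment $EF$ of length $1$ in the plane, and let $\mathcal{R}$ be a rectangle with vertices $A,B,C,D$ in counterclockwise order, $|AB|=|CD|=\frac12$, $|BC|=|AD|=\frac14$, labelled so that, with $O_1$ the centre of $\mathcal{R}$, $A=O_1+\frac{\sqrt5}{8}(\cos\alpha,\sin\alpha)$ for some $\alpha\in[\theta_0,\theta_0+\pi)$, where $\theta_0=\arctan\frac12$. Then $\mu(\mathcal{L},\mathcal{R})\geq \frac{\sqrt5}{8}\sin\alpha$.
   Context: $\mu(K_1,\dots,K_n)$ denotes the area of the convex hull of $K_1\cup\dots\cup K_n$. (For any such rectangle exactly one labelling satisfying these conditions exists; then the vector $\overrightarrow{CA}$ has argument $\alpha$ and $\overrightarrow{CD}$ has argument $\alpha-\theta_0$.) *)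

theory Defs
  imports "HOL-Analysis.Analysis"
begin

text \<open>Points of the plane are complex numbers. \<mu>(K1,...,Kn) is the area (Lebesgue
measure) of the convex hull of the union.\<close>
definition mu :: "complex set list \<Rightarrow> real" where
  "mu Ks = measure lebesgue (convex hull (\<Union>(set Ks)))"

definition theta0 :: real where
  "theta0 = arctan (1/2)"

end

theory Submission
  imports Defs "HOL-Analysis.Analysis"
begin

definition c2 :: "real^2 \<Rightarrow> complex" where "c2 v = Complex (v$1) (v$2)"
definition g2 :: "complex \<Rightarrow> real^2" where "g2 z = vector [Re z, Im z]"

lemma c2_g2[simp]: "c2 (g2 z) = z" by (simp add: c2_def g2_def complex_eq_iff)
lemma g2_c2[simp]: "g2 (c2 v) = v"
  by (simp add: c2_def g2_def vec_eq_iff forall_2)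

lemma Basis_vec2: "(Basis :: (real^2) set) = {axis 1 1, axis 2 1}"
  apply (auto simp: Basis_vec_def)
  subgoal for i using exhaust_2[of i] by auto
  done

lemma c2_meas[measurable]: "c2 \<in> borel_measurable borel"
proof -
  have "continuous_on UNIV c2" unfolding c2_def
    by (intro continuous_intros)
  then show ?thesis by (rule borel_measurable_continuous_onI)
qed

lemma distr_c2: "distr lborel borel c2 = lborel"
proof (rule lborel_eqI[symmetric])
  fix l u :: complex
  assume le: "\<And>b. b \<in> Basis \<Longrightarrow> l \<bullet> b \<le> u \<bullet> b"
  have le2: "Re l \<le> Re u" "Im l \<le> Im u" using le[of 1] le[of \<i>] by (auto simp: Basis_complex_def)
  have "c2 -` box l u = box (g2 l) (g2 u)"
    by (auto simp: box_def c2_def g2_def Basis_vec2 Basis_complex_def inner_axis)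
  then have "emeasure (distr lborel borel c2) (box l u) = emeasure lborel (box (g2 l) (g2 u))"
    by (subst emeasure_distr) auto
  also have "\<dots> = (\<Prod>b\<in>Basis. (g2 u - g2 l) \<bullet> b)"
    using le2 by (intro emeasure_lborel_box) (auto simp: Basis_vec2 g2_def inner_axis)
  also have "\<dots> = (\<Prod>b\<in>Basis. (u - l) \<bullet> b)"
    by (simp add: Basis_vec2 Basis_complex_def g2_def inner_axis axis_eq_axis)
  finally show "emeasure (distr lborel borel c2) (box l u) = (\<Prod>b\<in>Basis. (u - l) \<bullet> b)" .
qed simp

lemma measure_g2:
  assumes "S \<in> sets borel"
  shows "measure lebesgue (g2 ` S) = measure lebesgue S"
proof -
  have im: "g2 ` S = c2 -` S"
    by (auto simp: image_iff) (metis g2_c2)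
  have gb: "g2 ` S \<in> sets borel" unfolding im using measurable_sets[OF c2_meas assms] by simp
  have "measure lebesgue S = measure lborel S" using assms by simp
  also have "\<dots> = measure (distr lborel borel c2) S" by (simp add: distr_c2)
  also have "\<dots> = measure lborel (c2 -` S)" using assms by (subst measure_distr) auto
  also have "\<dots> = measure lebesgue (g2 ` S)" using gb im by simp
  finally show ?thesis by simp
qed

lemma linear_g2: "linear g2"
  by (rule linearI) (auto simp: g2_def vec_eq_iff forall_2)

lemma tri_area:
  assumes h: "Im E = Im F" and l: "cmod (F - E) = 1"
  shows "measure lebesgue (convex hull {E, F, X}) = \<bar>Im X - Im E\<bar> / 2"
proof -
  have cpt: "compact (convex hull {E, F, X})" by (intro finite_imp_compact_convex_hull) auto
  then have bor: "convex hull {E, F, X} \<in> sets borel" by (auto dest: compact_imp_closed)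
  have "measure lebesgue (convex hull {E, F, X}) = measure lebesgue (g2 ` (convex hull {E, F, X}))"
    using measure_g2[OF bor] by simp
  also have "g2 ` (convex hull {E, F, X}) = convex hull {g2 E, g2 F, g2 X}"
    by (simp add: convex_hull_linear_image[OF linear_g2])
  also have "measure lebesgue (convex hull {g2 E, g2 F, g2 X}) = Henstock_Kurzweil_Integration.content (convex hull {g2 E, g2 F, g2 X})"
    by (intro measure_completion) (auto intro!: borel_closed compact_imp_closed finite_imp_compact_convex_hull)
  also have "\<dots> = \<bar>(Re X - Re E) * (Im F - Im E) - (Re F - Re E) * (Im X - Im E)\<bar> / 2"
    by (simp add: content_triangle g2_def)
  also have "\<dots> = \<bar>Re F - Re E\<bar> * \<bar>Im X - Im E\<bar> / 2" using h by (simp add: abs_mult)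
  also have "\<bar>Re F - Re E\<bar> = 1"
  proof -
    have "cmod (F - E) = \<bar>Re (F - E)\<bar>" using h by (simp add: cmod_def)
    then show ?thesis using l by simp
  qed
  finally show ?thesis by simp
qed

lemma im_ge_hull: "(\<And>z. z \<in> S \<Longrightarrow> h \<le> Im z) \<Longrightarrow> z \<in> convex hull S \<Longrightarrow> h \<le> Im z"
proof -
  assume a: "\<And>z. z \<in> S \<Longrightarrow> h \<le> Im z" and z: "z \<in> convex hull S"
  have cv: "convex {z. h \<le> \<i> \<bullet> z}" by (rule convex_halfspace_ge)
  have "S \<subseteq> {z. h \<le> \<i> \<bullet> z}" using a by (auto simp: inner_complex_def)
  then have "convex hull S \<subseteq> {z. h \<le> \<i> \<bullet> z}" using cv by (rule hull_minimal)
  then show ?thesis using z by (auto simp: inner_complex_def)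
qed

lemma im_le_hull: "(\<And>z. z \<in> S \<Longrightarrow> Im z \<le> h) \<Longrightarrow> z \<in> convex hull S \<Longrightarrow> Im z \<le> h"
proof -
  assume a: "\<And>z. z \<in> S \<Longrightarrow> Im z \<le> h" and z: "z \<in> convex hull S"
  have cv: "convex {z. \<i> \<bullet> z \<le> h}" by (rule convex_halfspace_le)
  have "S \<subseteq> {z. \<i> \<bullet> z \<le> h}" using a by (auto simp: inner_complex_def)
  then have "convex hull S \<subseteq> {z. \<i> \<bullet> z \<le> h}" using cv by (rule hull_minimal)
  then show ?thesis using z by (auto simp: inner_complex_def)
qed

theorem mainTheorem5:
  fixes E F A B C D :: complex and \<alpha> :: real
  assumes horiz: "Im E = Im F"
    and lenL: "cmod (F - E) = 1"
    and AB: "cmod (B - A) = 1/2"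
    and BC: "C - B = \<i> * (B - A) / 2"
    and AD: "D - A = C - B"
    and labA: "A = (A + C) / 2 + complex_of_real (sqrt 5 / 8) * cis \<alpha>"
    and alpha: "theta0 \<le> \<alpha>" "\<alpha> < theta0 + pi"
  shows "mu [closed_segment E F, convex hull {A, B, C, D}] \<ge> sqrt 5 / 8 * sin \<alpha>"
proof -
  define K where "K = convex hull (closed_segment E F \<union> convex hull {A, B, C, D})"
  have muK: "mu [closed_segment E F, convex hull {A, B, C, D}] = measure lebesgue K"
    by (simp add: mu_def K_def)
  have cK: "compact K" unfolding K_def
    by (intro compact_convex_hull compact_Un compact_segment finite_imp_compact_convex_hull) auto
  then have mK: "K \<in> fmeasurable lebesgue" by (rule lmeasurable_compact)
  have sub: "convex hull {E, F, X} \<subseteq> K" if "X \<in> {A, C}" for X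
    unfolding K_def using that by (intro hull_mono) (auto intro: hull_inc)
  have cT: "compact (convex hull {E, F, X})" for X by (intro finite_imp_compact_convex_hull) auto
  have mT: "convex hull {E, F, X} \<in> fmeasurable lebesgue" for X by (rule lmeasurable_compact[OF cT])
  have leT: "measure lebesgue (convex hull {E, F, X}) \<le> measure lebesgue K" if "X \<in> {A, C}" for X
    using sub[OF that] mT mK by (intro measure_mono_fmeasurable) auto
  have rhs: "sqrt 5 / 8 * sin \<alpha> = (Im A - Im C) / 2"
  proof -
    have "Im A = Im ((A + C) / 2 + complex_of_real (sqrt 5 / 8) * cis \<alpha>)" using labA by simp
    then show ?thesis by (simp add: field_simps)
  qed
  define h where "h = Im E"
  have TA: "measure lebesgue (convex hull {E, F, A}) = \<bar>Im A - h\<bar> / 2"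
    unfolding h_def by (rule tri_area[OF horiz lenL])
  have TC: "measure lebesgue (convex hull {E, F, C}) = \<bar>Im C - h\<bar> / 2"
    unfolding h_def by (rule tri_area[OF horiz lenL])
  have K0: "0 \<le> measure lebesgue K" by simp
  have fin: "(Im A - Im C) / 2 \<le> measure lebesgue K"
  proof (cases "Im A \<le> Im C")
    case True
    have X: "(Im A - Im C) / 2 \<le> 0" using True by simp
    show ?thesis using X K0 by linarith
  next
    case False
    show ?thesis
    proof (cases "h \<ge> Im A")
      case True
      have "(Im A - Im C) / 2 \<le> \<bar>Im C - h\<bar> / 2" using True False by (simp add: abs_if)
      also have "\<dots> \<le> measure lebesgue K" using leT[of C] TC by simp
      finally show ?thesis .
    next
      case h1: False
      show ?thesis
      proof (cases "h \<le> Im C")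
        case True
        have "(Im A - Im C) / 2 \<le> \<bar>Im A - h\<bar> / 2" using True False by (simp add: abs_if)
        also have "\<dots> \<le> measure lebesgue K" using leT[of A] TA by simp
        finally show ?thesis .
      next
        case h2: False
        let ?T1 = "convex hull {E, F, A}" and ?T2 = "convex hull {E, F, C}"
        have "?T1 \<inter> ?T2 \<subseteq> {z. \<i> \<bullet> z = h}"
        proof
          fix z assume z: "z \<in> ?T1 \<inter> ?T2"
          have hA: "h < Im A" using h1 by simp
          have hC: "Im C < h" using h2 by simp
          have hE: "Im E = h" "Im F = h" using horiz by (simp_all add: h_def)
          have "h \<le> Im z"
          proof (rule im_ge_hull[of "{E, F, A}"])
            show "\<And>w. w \<in> {E, F, A} \<Longrightarrow> h \<le> Im w" using hA hE by fastforce
            show "z \<in> convex hull {E, F, A}" using z by blast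
          qed
          moreover have "Im z \<le> h"
          proof (rule im_le_hull[of "{E, F, C}"])
            show "\<And>w. w \<in> {E, F, C} \<Longrightarrow> Im w \<le> h" using hC hE by fastforce
            show "z \<in> convex hull {E, F, C}" using z by blast
          qed
          ultimately show "z \<in> {z. \<i> \<bullet> z = h}" by (simp add: inner_complex_def)
        qed
        then have "negligible (?T1 \<inter> ?T2)"
          by (rule negligible_subset[OF negligible_hyperplane, rotated]) simp
        then have n0: "measure lebesgue (?T1 \<inter> ?T2) = 0" by (rule negligible_imp_measure0)
        have "measure lebesgue (?T1 \<union> ?T2) = measure lebesgue ?T1 + measure lebesgue ?T2"
          using measure_Un3[OF mT mT, of A C] n0 by simp
        also have "\<dots> = (Im A - Im C) / 2" using TA TC h1 h2 by simp
        finally have eq: "measure lebesgue (?T1 \<union> ?T2) = (Im A - Im C) / 2" .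
        have "measure lebesgue (?T1 \<union> ?T2) \<le> measure lebesgue K"
          using sub[of A] sub[of C] mK mT[of A] mT[of C] by (intro measure_mono_fmeasurable) auto
        then show ?thesis using eq by simp
      qed
    qed
  qed
  then show ?thesis unfolding muK rhs .
qed

end
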